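(* Let $\mathcal{F}=\mathcal{B}(K_3)$. Then for $n\ge 3$, $$2^{n-2}(1-o(1))\le f(n,\mathcal{F})\le 2^{n-2},$$ where $o(1)\to 0$ as $n\to\infty$.
   Context: For a graph $G$, a hypergraph $H$ is a Berge-$G$ hypergraph if there are an injective map $\phi:V(G)\to V(H)$ and pairwise distinct hyperedges $e_{xy}\in E(H)$, one for each $xy\in E(G)$, with $\phi(x),\phi(y)\in e_{xy}$. $\mathcal{B}(G)$ denotes the family of all Berge-$G$ hypergraphs. For a positive integer $n$ and a graph $G$, $f(n,\mathcal{B}(G))$ is the smallest number of colors in a coloring of all subsets of $[n]=\{1,\dots,n\}$ (i.e. of $2^{[n]}$) such that there is no monochromatic Berge-$G$ hypergraph, i.e. no color class, viewed as a (non-uniform) hypergraph on $[n]$, contains a Berge-$G$ subhypergraph. *)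

theory Defs
  imports Complex_Main
begin

text \<open>A graph G is given by a vertex set VG and a set EG of 2-element subsets of VG.\<close>

definition contains_berge ::
  "'v set \<Rightarrow> 'v set set \<Rightarrow> 'a set \<Rightarrow> 'a set set \<Rightarrow> bool" where
  "contains_berge VG EG V H \<longleftrightarrow>
     (\<exists>phi e. inj_on phi VG \<and> phi ` VG \<subseteq> V \<and> inj_on e EG \<and> e ` EG \<subseteq> H \<and>
        (\<forall>xy\<in>EG. phi ` xy \<subseteq> e xy))"

definition K3_V :: "nat set" where "K3_V = {0,1,2}"
definition K3_E :: "nat set set" where "K3_E = {{0,1},{1,2},{0,2}}"

definition no_mono_berge ::
  "'v set \<Rightarrow> 'v set set \<Rightarrow> nat \<Rightarrow> (nat set \<Rightarrow> nat) \<Rightarrow> bool" where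
  "no_mono_berge VG EG n c \<longleftrightarrow>
     (\<forall>i. \<not> contains_berge VG EG {1..n} {A. A \<subseteq> {1..n} \<and> c A = i})"

definition f_berge :: "'v set \<Rightarrow> 'v set set \<Rightarrow> nat \<Rightarrow> nat" where
  "f_berge VG EG n =
     (LEAST k. \<exists>c. (\<forall>A. A \<subseteq> {1..n} \<longrightarrow> c A < k) \<and> no_mono_berge VG EG n c)"

end

theory Submission
  imports Defs
begin

definition nrm :: "nat \<Rightarrow> nat set \<Rightarrow> nat set" where
  "nrm n A = (if 1 \<in> A then {1..n} - A else A)"
definition key :: "nat \<Rightarrow> nat set \<Rightarrow> nat set" where
  "key n A = nrm n A - {2}"

lemma nrm_disj:
  assumes "A \<subseteq> {1..n}" "B \<subseteq> {1..n}" "nrm n A = nrm n B" "A \<noteq> B"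
  shows "A \<inter> B = {}"
proof (cases "1 \<in> A"; cases "1 \<in> B")
  assume "1 \<in> A" "1 \<in> B"
  then have "{1..n} - A = {1..n} - B" using assms(3) by (simp add: nrm_def)
  then have "A = B" using assms(1,2) by blast
  then show ?thesis using assms(4) by simp
next
  assume "1 \<in> A" "1 \<notin> B"
  then have "{1..n} - A = B" using assms(3) by (simp add: nrm_def)
  then show ?thesis by blast
next
  assume "1 \<notin> A" "1 \<in> B"
  then have "A = {1..n} - B" using assms(3) by (simp add: nrm_def)
  then show ?thesis by blast
next
  assume "1 \<notin> A" "1 \<notin> B"
  then have "A = B" using assms(3) by (simp add: nrm_def)
  then show ?thesis using assms(4) by simp
qed

lemma key_sub: "A \<subseteq> {1..n} \<Longrightarrow> key n A \<in> Pow {3..n}"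
proof -
  assume A: "A \<subseteq> {1..n}"
  have "x \<in> {3..n}" if x: "x \<in> key n A" for x
  proof -
    have "x \<noteq> 2" "x \<in> {1..n}" "x \<noteq> 1" using x A by (auto simp: key_def nrm_def split: if_splits)
    then show ?thesis by auto
  qed
  then show ?thesis by blast
qed

lemma key_eq_nrm:
  assumes "key n A = key n B" "2 \<in> nrm n A \<longleftrightarrow> 2 \<in> nrm n B"
  shows "nrm n A = nrm n B"
proof -
  have "\<forall>x. x \<in> nrm n A \<longleftrightarrow> x \<in> nrm n B"
  proof
    fix x show "x \<in> nrm n A \<longleftrightarrow> x \<in> nrm n B"
    proof (cases "x = 2")
      case True then show ?thesis using assms(2) by simp
    next
      case False
      then show ?thesis using assms(1) unfolding key_def by blast
    qed
  qed
  then show ?thesis by blast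
qed

lemma three_keys:
  assumes "A \<subseteq> {1..n}" "B \<subseteq> {1..n}" "C \<subseteq> {1..n}"
    "key n A = key n B" "key n B = key n C"
    "A \<noteq> B" "B \<noteq> C" "A \<noteq> C"
  shows "A \<inter> B = {} \<or> B \<inter> C = {} \<or> A \<inter> C = {}"
proof -
  have "(2 \<in> nrm n A \<longleftrightarrow> 2 \<in> nrm n B) \<or> (2 \<in> nrm n B \<longleftrightarrow> 2 \<in> nrm n C)
        \<or> (2 \<in> nrm n A \<longleftrightarrow> 2 \<in> nrm n C)" by blast
  then show ?thesis
  proof (elim disjE)
    assume "2 \<in> nrm n A \<longleftrightarrow> 2 \<in> nrm n B"
    then have "nrm n A = nrm n B" using key_eq_nrm assms(4) by blast
    then show ?thesis using nrm_disj assms(1,2,6) by blast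
  next
    assume "2 \<in> nrm n B \<longleftrightarrow> 2 \<in> nrm n C"
    then have "nrm n B = nrm n C" using key_eq_nrm assms(5) by blast
    then show ?thesis using nrm_disj assms(2,3,7) by blast
  next
    assume h: "2 \<in> nrm n A \<longleftrightarrow> 2 \<in> nrm n C"
    have "key n A = key n C" using assms(4,5) by simp
    then have "nrm n A = nrm n C" using key_eq_nrm h by blast
    then show ?thesis using nrm_disj assms(1,3,8) by blast
  qed
qed

lemma upper_col:
  assumes "n \<ge> 3"
  shows "\<exists>c. (\<forall>A. A \<subseteq> {1..n} \<longrightarrow> c A < 2 ^ (n - 2)) \<and> no_mono_berge K3_V K3_E n c"
proof -
  define P where "P = Pow {3..n}"
  have cP: "card P = 2 ^ (n - 2)" unfolding P_def by (simp add: card_Pow)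
  have fP: "finite P" unfolding P_def by simp
  obtain h where h: "bij_betw h {0..<(2::nat) ^ (n - 2)} P"
    using ex_bij_betw_nat_finite[OF fP] cP by auto
  define g where "g = inv_into {0..<(2::nat) ^ (n - 2)} h"
  have g: "bij_betw g P {0..<2 ^ (n - 2)}" unfolding g_def by (rule bij_betw_inv_into[OF h])
  define c where "c = (\<lambda>A. g (key n A))"
  have crange: "\<forall>A. A \<subseteq> {1..n} \<longrightarrow> c A < 2 ^ (n - 2)"
  proof (intro allI impI)
    fix A assume "A \<subseteq> {1..n}"
    then have "key n A \<in> P" using key_sub P_def by simp
    then show "c A < 2 ^ (n - 2)" using g unfolding c_def bij_betw_def by auto
  qed
  have ckey: "key n A = key n B" if "A \<subseteq> {1..n}" "B \<subseteq> {1..n}" "c A = c B" for A B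
  proof -
    have "key n A \<in> P" "key n B \<in> P" using key_sub P_def that by auto
    then show ?thesis using g that(3) unfolding c_def bij_betw_def inj_on_def by blast
  qed
  have "no_mono_berge K3_V K3_E n c"
    unfolding no_mono_berge_def
  proof (intro allI notI)
    fix i assume "contains_berge K3_V K3_E {1..n} {A. A \<subseteq> {1..n} \<and> c A = i}"
    then obtain phi e where inj: "inj_on e K3_E" and sub: "e ` K3_E \<subseteq> {A. A \<subseteq> {1..n} \<and> c A = i}"
      and ph: "\<forall>xy\<in>K3_E. phi ` xy \<subseteq> e xy"
      unfolding contains_berge_def by (elim exE conjE)
    define E1 where "E1 = e {0,1}"
    define E2 where "E2 = e {1,2}"
    define E3 where "E3 = e {0,2}"
    have mem: "{0,1} \<in> K3_E" "{1,2} \<in> K3_E" "{0,2} \<in> K3_E" by (auto simp: K3_E_def)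
    have neq: "{0::nat,1} \<noteq> {1,2}" "{1::nat,2} \<noteq> {0,2}" "{0::nat,1} \<noteq> {0,2}"
      by (auto simp: doubleton_eq_iff)
    have d: "E1 \<noteq> E2" "E2 \<noteq> E3" "E1 \<noteq> E3"
      unfolding E1_def E2_def E3_def using inj_on_eq_iff[OF inj] mem neq by simp_all
    have s: "E1 \<subseteq> {1..n}" "E2 \<subseteq> {1..n}" "E3 \<subseteq> {1..n}" "c E1 = i" "c E2 = i" "c E3 = i"
      using sub mem unfolding E1_def E2_def E3_def by auto
    have i: "phi 1 \<in> E1 \<inter> E2" "phi 2 \<in> E2 \<inter> E3" "phi 0 \<in> E1 \<inter> E3"
      using ph mem unfolding E1_def E2_def E3_def by auto
    have k: "key n E1 = key n E2" "key n E2 = key n E3"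
      using ckey[OF s(1) s(2)] ckey[OF s(2) s(3)] s(4,5,6) by simp_all
    have ne: "E1 \<inter> E2 \<noteq> {}" "E2 \<inter> E3 \<noteq> {}" "E1 \<inter> E3 \<noteq> {}" using i by auto
    show False using three_keys[OF s(1,2,3) k d] ne by simp
  qed
  then show ?thesis using crange by blast
qed



lemma inter3:
  assumes "A \<subseteq> {1..n}" "B \<subseteq> {1..n}" "n + 3 \<le> 2 * card A" "n + 3 \<le> 2 * card B"
  shows "3 \<le> card (A \<inter> B)"
proof -
  have fA: "finite A" "finite B" using assms(1,2) finite_subset by blast+
  have "card (A \<union> B) \<le> n" using card_mono[of "{1..n}" "A \<union> B"] assms(1,2) by simp
  moreover have "card A + card B = card (A \<union> B) + card (A \<inter> B)" using card_Un_Int fA by blast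
  ultimately show ?thesis using assms(3,4) by linarith
qed

lemma berge_of_three:
  assumes "A \<in> H" "B \<in> H" "C \<in> H" "A \<noteq> B" "B \<noteq> C" "A \<noteq> C"
    "x \<in> A" "x \<in> C" "y \<in> A" "y \<in> B" "z \<in> B" "z \<in> C"
    "x \<noteq> y" "y \<noteq> z" "x \<noteq> z" "x \<in> V" "y \<in> V" "z \<in> V"
  shows "contains_berge K3_V K3_E V H"
proof -
  define phi :: "nat \<Rightarrow> 'a" where "phi = (\<lambda>i. if i = 0 then x else if i = 1 then y else z)"
  define e :: "nat set \<Rightarrow> 'a set" where "e = (\<lambda>s. if s = {0,1} then A else if s = {1,2} then B else C)"
  have neq: "{0::nat,1} \<noteq> {1,2}" "{1::nat,2} \<noteq> {0,2}" "{0::nat,1} \<noteq> {0,2}"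
    by (auto simp: doubleton_eq_iff)
  have e: "e {0,1} = A" "e {1,2} = B" "e {0,2} = C" using neq unfolding e_def by auto
  have "inj_on phi K3_V" unfolding inj_on_def K3_V_def phi_def using assms by auto
  moreover have "phi ` K3_V \<subseteq> V" unfolding K3_V_def phi_def using assms by auto
  moreover have "inj_on e K3_E" unfolding inj_on_def K3_E_def using e assms by auto
  moreover have "e ` K3_E \<subseteq> H" unfolding K3_E_def using e assms by auto
  moreover have "\<forall>xy\<in>K3_E. phi ` xy \<subseteq> e xy" unfolding K3_E_def using e assms
    by (auto simp: phi_def)
  ultimately show ?thesis unfolding contains_berge_def by blast
qed

lemma fiber:
  assumes "no_mono_berge K3_V K3_E n c"
  shows "card {A. A \<subseteq> {1..n} \<and> n + 3 \<le> 2 * card A \<and> c A = i} \<le> 2"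
proof (rule ccontr)
  define F where "F = {A. A \<subseteq> {1..n} \<and> n + 3 \<le> 2 * card A \<and> c A = i}"
  assume "\<not> card {A. A \<subseteq> {1..n} \<and> n + 3 \<le> 2 * card A \<and> c A = i} \<le> 2"
  then have "3 \<le> card F" unfolding F_def by simp
  then obtain T where T: "T \<subseteq> F" "card T = 3" by (meson obtain_subset_with_card_n)
  then obtain A B C where ABC: "T = {A,B,C}" "A \<noteq> B" "B \<noteq> C" "A \<noteq> C"
    using card_3_iff by metis
  have AF: "A \<in> F" "B \<in> F" "C \<in> F" using T ABC by auto
  have sub: "A \<subseteq> {1..n}" "B \<subseteq> {1..n}" "C \<subseteq> {1..n}"
    and big: "n + 3 \<le> 2 * card A" "n + 3 \<le> 2 * card B" "n + 3 \<le> 2 * card C"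
    and col: "c A = i" "c B = i" "c C = i" using AF unfolding F_def by auto
  have fin: "finite (A \<inter> B)" "finite (A \<inter> C)" "finite (B \<inter> C)"
    using sub by (meson finite_atLeastAtMost finite_subset finite_Int)+
  have c1: "3 \<le> card (A \<inter> B)" using inter3[OF sub(1,2) big(1,2)] .
  have c2: "3 \<le> card (A \<inter> C)" using inter3[OF sub(1,3) big(1,3)] .
  have c3: "3 \<le> card (B \<inter> C)" using inter3[OF sub(2,3) big(2,3)] .
  have "A \<inter> B \<noteq> {}" using c1 by (metis card.empty not_numeral_le_zero)
  then obtain y where y: "y \<in> A \<inter> B" by blast
  have "\<not> A \<inter> C \<subseteq> {y}"
  proof
    assume "A \<inter> C \<subseteq> {y}"
    then have "card (A \<inter> C) \<le> 1" using card_mono[of "{y}"] by fastforce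
    then show False using c2 by simp
  qed
  then obtain x where x: "x \<in> A \<inter> C" "x \<noteq> y" by blast
  have "\<not> B \<inter> C \<subseteq> {x,y}"
  proof
    assume "B \<inter> C \<subseteq> {x,y}"
    then have "card (B \<inter> C) \<le> card {x,y}" using card_mono[of "{x,y}"] by fastforce
    also have "\<dots> \<le> 2" by (simp add: card_insert_le_m1)
    finally show False using c3 by simp
  qed
  then obtain z where z: "z \<in> B \<inter> C" "z \<noteq> x" "z \<noteq> y" by blast
  define H where "H = {A. A \<subseteq> {1..n} \<and> c A = i}"
  have "contains_berge K3_V K3_E {1..n} H"
  proof (rule berge_of_three[of A H B C x y z])
    show "A \<in> H" "B \<in> H" "C \<in> H" using sub col unfolding H_def by simp_all
    show "A \<noteq> B" "B \<noteq> C" "A \<noteq> C" using ABC by simp_all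
    show "x \<in> A" "x \<in> C" "y \<in> A" "y \<in> B" "z \<in> B" "z \<in> C" using x y z by simp_all
    show "x \<noteq> y" "y \<noteq> z" "x \<noteq> z" using x y z by simp_all
    show "x \<in> {1..n}" "y \<in> {1..n}" "z \<in> {1..n}" using x y z sub by blast+
  qed
  then show False using assms unfolding no_mono_berge_def H_def by blast
qed



lemma cb_odd_eq: "Suc (Suc (2*m)) choose Suc m = 2 * (Suc (2*m) choose m)"
proof -
  have o: "odd (Suc (2*m))" by simp
  have d: "Suc (2*m) div 2 = m" by simp
  have "Suc (2*m) choose Suc m = Suc (2*m) choose m"
    using central_binomial_odd[OF o] d by simp
  then show ?thesis by simp
qed

lemma cb_rec: "(Suc (Suc (2*m)) choose Suc m) * Suc m = 2 * (2*m+1) * (2*m choose m)"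
proof -
  have o: "odd (Suc (2*m))" by simp
  have d: "Suc (2*m) div 2 = m" by simp
  have e: "Suc (2*m) choose Suc m = Suc (2*m) choose m"
    using central_binomial_odd[OF o] d by simp
  have "Suc (2*m) * (2*m choose m) = (Suc (2*m) choose Suc m) * Suc m"
    by (rule Suc_times_binomial_eq)
  then show ?thesis using cb_odd_eq[of m] e by (simp del: binomial_Suc_Suc add: algebra_simps)
qed

lemma cb_even: "(2*m choose m)^2 * (2*m+1) \<le> (16::nat)^m"
proof (induction m)
  case 0 then show ?case by simp
next
  case (Suc m)
  define a where "a = 2*m choose m"
  define b where "b = Suc (Suc (2*m)) choose Suc m"
  have r: "b * (m+1) = 2*(2*m+1)*a" using cb_rec[of m] unfolding a_def b_def by simp
  have IH: "a^2 * (2*m+1) \<le> 16^m" using Suc.IH unfolding a_def .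
  have "(m+1)^2 * (b^2 * (2*m+3)) = (b*(m+1))^2 * (2*m+3)" by (simp add: power2_eq_square algebra_simps)
  also have "\<dots> = (4*(2*m+1)*(2*m+3)) * (a^2*(2*m+1))" unfolding r by (simp add: power2_eq_square algebra_simps)
  also have "\<dots> \<le> (4*(2*m+1)*(2*m+3)) * 16^m" using IH by (rule mult_left_mono) simp
  also have "\<dots> \<le> (16*(m+1)^2) * 16^m" 
    by (rule mult_right_mono) (simp_all add: power2_eq_square algebra_simps)
  also have "\<dots> = (m+1)^2 * 16^(Suc m)" by simp
  finally have "(m+1)^2 * (b^2 * (2*m+3)) \<le> (m+1)^2 * 16^(Suc m)" .
  then have "b^2 * (2*m+3) \<le> 16^(Suc m)" by simp
  moreover have e3: "Suc (Suc (2*m)) + 1 = 2*m+3" by simp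
  ultimately have X: "b^2 * (Suc (Suc (2*m)) + 1) \<le> 16^(Suc m)"
    unfolding e3 by blast
  have eq1: "2 * Suc m = Suc (Suc (2*m))" by simp
  show ?case unfolding eq1 b_def[symmetric] by (rule X)
qed

lemma cb: "(n choose (n div 2))^2 * (n+1) \<le> (4::nat)^n"
proof (cases "even n")
  case True
  then obtain m where m: "n = 2*m" by blast
  have "(4::nat)^n = 16^m" unfolding m by (simp add: power_mult)
  then show ?thesis using cb_even[of m] m by simp
next
  case False
  then obtain m where m: "n = Suc (2*m)" using oddE by (metis Suc_eq_plus1)
  have d: "n div 2 = m" using m by simp
  have e: "(Suc m * 2 choose Suc m) = 2 * (n choose m)" using cb_odd_eq[of m] m by (simp add: mult.commute)
  have "(Suc m * 2 choose Suc m)^2 * (2 * Suc m + 1) \<le> 16^(Suc m)" using cb_even[of "Suc m"] by (simp add: mult.commute)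
  moreover have "(16::nat)^m = 4^m * 4^m" using power_mult_distrib[of "4::nat" 4 m] by simp
  ultimately have "4 * ((n choose m)^2 * (n + 2)) \<le> 4 * 4^n"
    unfolding e m by (simp add: power2_eq_square power_mult algebra_simps)
  then have "(n choose m)^2 * (n + 2) \<le> 4^n" by simp
  moreover have "(n choose m)^2 * (n + 1) \<le> (n choose m)^2 * (n + 2)" by simp
  ultimately show ?thesis using d by simp
qed

lemma cb_real: "real (n choose (n div 2)) * sqrt (real n + 1) \<le> 2^n"
proof -
  have "real ((n choose (n div 2))^2 * (n+1)) \<le> real ((4::nat)^n)" using cb by (rule of_nat_mono)
  moreover have "((2::real)^n)^2 = 4^n"
    using power_mult[of "2::real" 2 n] power_mult[of "2::real" n 2] by (simp add: mult.commute)
  ultimately have "(real (n choose (n div 2)))^2 * (real n + 1) \<le> (2^n)^2"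
    by (simp add: algebra_simps)
  then have "sqrt ((real (n choose (n div 2)))^2 * (real n + 1)) \<le> sqrt ((2^n)^2)"
    by (rule real_sqrt_le_mono)
  then show ?thesis by (simp add: real_sqrt_mult)
qed

lemma lim3: "(\<lambda>n. 3 / sqrt (real n + 1)) \<longlonglongrightarrow> 0"
proof -
  have a: "filterlim (\<lambda>x. 1 + real x) at_top sequentially"
    using filterlim_tendsto_add_at_top[OF tendsto_const filterlim_real_sequentially] .
  have a2: "filterlim (\<lambda>x. real x + 1) at_top sequentially"
    using a by (simp add: add.commute)
  have "filterlim (\<lambda>n. sqrt (real n + 1)) at_top sequentially"
    by (rule filterlim_compose[OF sqrt_at_top a2])
  then show ?thesis by (intro tendsto_divide_0[OF tendsto_const] filterlim_at_top_imp_at_infinity)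
qed



lemma large_le:
  assumes "\<forall>A. A \<subseteq> {1..n} \<longrightarrow> c A < k" "no_mono_berge K3_V K3_E n c"
  shows "card {A. A \<subseteq> {1..n} \<and> n + 3 \<le> 2 * card A} \<le> 2 * k"
proof -
  define G where "G = (\<lambda>i. {A. A \<subseteq> {1..n} \<and> n + 3 \<le> 2 * card A \<and> c A = i})"
  have sub: "{A. A \<subseteq> {1..n} \<and> n + 3 \<le> 2 * card A} \<subseteq> (\<Union>i\<in>{..<k}. G i)"
    using assms(1) unfolding G_def by auto
  have fin: "finite (\<Union>i\<in>{..<k}. G i)"
    by (rule finite_subset[of _ "Pow {1..n}"]) (auto simp: G_def)
  have "card {A. A \<subseteq> {1..n} \<and> n + 3 \<le> 2 * card A} \<le> card (\<Union>i\<in>{..<k}. G i)"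
    by (rule card_mono[OF fin sub])
  also have "\<dots> \<le> (\<Sum>i\<in>{..<k}. card (G i))" by (rule card_UN_le) simp
  also have "\<dots> \<le> (\<Sum>i\<in>{..<k}. 2)" 
    by (rule sum_mono) (unfold G_def, rule fiber[OF assms(2)])
  finally show ?thesis by simp
qed

lemma count:
  "2^n \<le> 2 * card {A. A \<subseteq> {1..n} \<and> n + 3 \<le> 2 * card A} + 3 * (n choose (n div 2))"
proof -
  define F where "F = {A. A \<subseteq> {1..n} \<and> n + 3 \<le> 2 * card A}"
  define S where "S = {A. A \<subseteq> {1..n} \<and> 2 * card A + 3 \<le> n}"
  define L where "L = (\<lambda>k. {A. A \<subseteq> {1..n} \<and> card A = k})"
  define a where "a = n div 2 - 1"
  define b where "b = n div 2"
  define c where "c = n div 2 + 1"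
  have cover: "Pow {1..n} \<subseteq> S \<union> (L a \<union> L b \<union> L c) \<union> F"
  proof
    fix A assume "A \<in> Pow {1..n}"
    then have A: "A \<subseteq> {1..n}" by simp
    have "2 * card A + 3 \<le> n \<or> n + 3 \<le> 2 * card A \<or> card A = a \<or> card A = b \<or> card A = c"
      unfolding a_def b_def c_def by presburger
    then show "A \<in> S \<union> (L a \<union> L b \<union> L c) \<union> F"
      using A unfolding S_def L_def F_def by blast
  qed
  have finF: "finite F" by (rule finite_subset[of _ "Pow {1..n}"]) (auto simp: F_def)
  have finS: "finite S" by (rule finite_subset[of _ "Pow {1..n}"]) (auto simp: S_def)
  have finL: "finite (L k)" for k by (rule finite_subset[of _ "Pow {1..n}"]) (auto simp: L_def)
  have cL: "card (L k) \<le> n choose (n div 2)" for k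
  proof -
    have "card (L k) = card {1..n} choose k" unfolding L_def by (rule n_subsets) simp
    then show ?thesis using binomial_maximum by simp
  qed
  have cS: "card S \<le> card F"
  proof (rule card_inj_on_le[OF _ _ finF])
    show "inj_on (\<lambda>A. {1..n} - A) S" unfolding inj_on_def S_def by blast
    show "(\<lambda>A. {1..n} - A) ` S \<subseteq> F"
    proof
      fix B assume "B \<in> (\<lambda>A. {1..n} - A) ` S"
      then obtain A where A: "A \<in> S" "B = {1..n} - A" by blast
      have As: "A \<subseteq> {1..n}" using A unfolding S_def by simp
      have "card B = card {1..n} - card A" unfolding A(2)
        by (rule card_Diff_subset[OF finite_subset[OF As] As]) simp
      then have "card B = n - card A" by simp
      then show "B \<in> F" using A unfolding S_def F_def by auto
    qed
  qed
  have "(2::nat)^n = card (Pow {1..n})" by (simp add: card_Pow)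
  also have "\<dots> \<le> card (S \<union> (L a \<union> L b \<union> L c) \<union> F)"
    by (rule card_mono[OF _ cover]) (simp add: finF finS finL)
  also have "\<dots> \<le> card S + (card (L a) + card (L b) + card (L c)) + card F"
  proof -
    have "card (L a \<union> L b) \<le> card (L a) + card (L b)" by (rule card_Un_le)
    moreover have "card (L a \<union> L b \<union> L c) \<le> card (L a \<union> L b) + card (L c)" by (rule card_Un_le)
    moreover have "card (S \<union> (L a \<union> L b \<union> L c)) \<le> card S + card (L a \<union> L b \<union> L c)" by (rule card_Un_le)
    moreover have "card (S \<union> (L a \<union> L b \<union> L c) \<union> F) \<le> card (S \<union> (L a \<union> L b \<union> L c)) + card F" by (rule card_Un_le)
    ultimately show ?thesis by linarith
  qed
  also have "\<dots> \<le> card F + 3 * (n choose (n div 2)) + card F"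
    using cS cL[of a] cL[of b] cL[of c] by linarith
  finally show ?thesis unfolding F_def by simp
qed

theorem theorem1:
  shows "(\<forall>n\<ge>3. f_berge K3_V K3_E n \<le> 2 ^ (n - 2)) \<and>
         (\<exists>g :: nat \<Rightarrow> real. g \<longlonglongrightarrow> 0 \<and>
            (\<forall>n\<ge>3. 2 ^ (n - 2) * (1 - g n) \<le> real (f_berge K3_V K3_E n)))"
proof (intro conjI allI impI exI[of _ "\<lambda>n. 3 / sqrt (real n + 1)"])
  fix n :: nat assume n: "n \<ge> 3"
  show "f_berge K3_V K3_E n \<le> 2 ^ (n - 2)"
    unfolding f_berge_def by (rule Least_le) (rule upper_col[OF n])
next
  show "(\<lambda>n. 3 / sqrt (real n + 1)) \<longlonglongrightarrow> 0" by (rule lim3)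
next
  fix n :: nat assume n: "n \<ge> 3"
  define f where "f = f_berge K3_V K3_E n"
  have "\<exists>c. (\<forall>A. A \<subseteq> {1..n} \<longrightarrow> c A < f) \<and> no_mono_berge K3_V K3_E n c"
    unfolding f_def f_berge_def by (rule LeastI_ex) (use upper_col[OF n] in blast)
  then obtain c where c: "\<forall>A. A \<subseteq> {1..n} \<longrightarrow> c A < f" "no_mono_berge K3_V K3_E n c" by blast
  define C where "C = n choose (n div 2)"
  have "card {A. A \<subseteq> {1..n} \<and> n + 3 \<le> 2 * card A} \<le> 2 * f" by (rule large_le[OF c])
  then have "2^n \<le> 4 * f + 3 * C" using count[of n] unfolding C_def by linarith
  then have h1: "(2::real)^n \<le> 4 * real f + 3 * real C"
    by (metis (mono_tags, lifting) of_nat_add of_nat_le_iff of_nat_mult of_nat_numeral of_nat_power)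
  have sq: "sqrt (real n + 1) > 0" by simp
  have h2: "real C * sqrt (real n + 1) \<le> 2^n" unfolding C_def by (rule cb_real)
  then have h3: "real C \<le> 2^n / sqrt (real n + 1)" using sq by (simp add: field_simps)
  have p: "(2::real)^n = 4 * 2^(n-2)"
  proof -
    have "n = Suc (Suc (n - 2))" using n by simp
    then have "(2::real)^n = 2^(Suc (Suc (n-2)))" by metis
    then show ?thesis by simp
  qed
  have "2 ^ (n - 2) * (1 - 3 / sqrt (real n + 1)) = (2^n - 3 * (2^n / sqrt (real n + 1))) / 4"
    using p by (simp add: field_simps)
  also have "\<dots> \<le> (2^n - 3 * real C) / 4" using h3 by simp
  also have "\<dots> \<le> real f" using h1 by simp
  finally show "2 ^ (n - 2) * (1 - 3 / sqrt (real n + 1)) \<le> real (f_berge K3_V K3_E n)"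
    unfolding f_def .
qed

end
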